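(* Let $B_n(y)=\sum_{k=0}^n\frac{1}{n+1}\binom{2n+2}{n-k}\binom{n+k}{k}y^k$ be the Borel polynomials. Consider the Riordan array $$L=\left(\frac{1+xy}{(1+(y+1)x)^2},\ \frac{x}{(1+(y+1)x)^2}\right).$$ Then the first column of $L^{-1}$ is $(B_0(y),B_1(y),B_2(y),\dots)^T$, i.e. its generating function is $\sum_n B_n(y)x^n$. Equivalently, $B_n(y)$ is the $n$-th moment of the family of orthogonal polynomials $P_n(x)$ defined by $P_0(x)=1$, $P_1(x)=x-y-2$ and $$P_n(x)=(x-2(y+1))P_{n-1}(x)-(y+1)^2P_{n-2}(x)\quad(n\ge2),$$ i.e. $B_n(y)=\mathcal L(x^n)$ for the linear functional $\mathcal L$ with $\mathcal L(1)=1$ and $\mathcal L(P_n)=0$ for $n\ge1$.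
   Context: A Riordan array $(g(x),f(x))$ (with $g(0)\ne0$, $f(0)=0$, $f'(0)\ne0$) is the lower-triangular matrix with $(n,k)$ entry $[x^n]g(x)f(x)^k$. Riordan arrays form a group under matrix multiplication with $(g,f)\cdot(u,v)=(g\,u(f),v(f))$ and $(g,f)^{-1}=(1/g(\bar f),\bar f)$ where $\bar f$ is the compositional inverse of $f$. Here coefficients are polynomials in $y$. *)

theory Defs
  imports "HOL-Computational_Algebra.Polynomial" "HOL-Computational_Algebra.Formal_Power_Series"
begin

definition yv :: "rat poly" where "yv = [:0, 1:]"

definition borel :: "nat \<Rightarrow> rat poly" where
  "borel n = (\<Sum>k=0..n. monom (of_nat ((2*n+2) choose (n-k)) * of_nat ((n+k) choose k) / of_nat (n+1)) k)"

definition riordan :: "'a::comm_ring_1 fps \<Rightarrow> 'a fps \<Rightarrow> nat \<Rightarrow> nat \<Rightarrow> 'a" where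
  "riordan g f n k = fps_nth (g * f ^ k) n"

text \<open>1/(1+(y+1)x)^2 in Q[y][[x]] (constant term 1, so the inverse exists).\<close>
definition Ldenom_inv :: "rat poly fps" where
  "Ldenom_inv = fps_right_inverse ((1 + fps_const (yv + 1) * fps_X) ^ 2) 1"

definition Lg :: "rat poly fps" where
  "Lg = (1 + fps_const yv * fps_X) * Ldenom_inv"

definition Lf :: "rat poly fps" where
  "Lf = fps_X * Ldenom_inv"

definition Lmat :: "nat \<Rightarrow> nat \<Rightarrow> rat poly" where
  "Lmat = riordan Lg Lf"

fun Pop :: "nat \<Rightarrow> rat poly poly" where
  "Pop 0 = 1"
| "Pop (Suc 0) = [:- (yv + 2), 1:]"
| "Pop (Suc (Suc n)) = [:- (2 * (yv + 1)), 1:] * Pop (Suc n) - smult ((yv + 1)^2) (Pop n)"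

definition is_lower_inverse :: "(nat \<Rightarrow> nat \<Rightarrow> 'a::comm_ring_1) \<Rightarrow> (nat \<Rightarrow> nat \<Rightarrow> 'a) \<Rightarrow> bool" where
  "is_lower_inverse A M \<longleftrightarrow> (\<forall>i j. i < j \<longrightarrow> M i j = 0) \<and>
     (\<forall>i j. (\<Sum>k\<le>i. A i k * M k j) = (if i = j then 1 else 0))"

definition moment_functional :: "(rat poly poly \<Rightarrow> rat poly) \<Rightarrow> bool" where
  "moment_functional \<L> \<longleftrightarrow> (\<forall>p q. \<L> (p + q) = \<L> p + \<L> q) \<and> (\<forall>c p. \<L> (smult c p) = c * \<L> p)
     \<and> \<L> 1 = 1 \<and> (\<forall>n\<ge>1. \<L> (Pop n) = 0)"

end

theory Submission
  imports Defs
begin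


lemma pascal2a: "Suc (Suc (Suc (N + j))) choose Suc (N + e) =
   (Suc (Suc (N + j)) choose (N + e)) + (Suc (N + j) choose (N + e)) + (Suc (N + j) choose Suc (N + e))"
  by simp

lemma pascal2b: "Suc (Suc (Suc (Suc (N + j)))) choose Suc (Suc (N + e)) =
   (Suc (Suc (N + j)) choose (N + e)) + 2 * (Suc (Suc (N + j)) choose Suc (N + e)) + (Suc (Suc (N + j)) choose Suc (Suc (N + e)))"
  by simp

definition th :: "nat \<Rightarrow> nat \<Rightarrow> rat" where
  "th N j = of_nat ((N+j) choose N) - of_nat ((N+j) choose Suc N)"

lemma th_rec1: "th (Suc N) (Suc (Suc j)) = th N (Suc (Suc j)) + th N (Suc j) + th (Suc N) j"
proof -
  have a: "Suc N + Suc (Suc j) = Suc (Suc (Suc (N + j)))" "N + Suc (Suc j) = Suc (Suc (N+j))"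
     "N + Suc j = Suc (N + j)" "Suc N + j = Suc (N + j)" by simp_all
  show ?thesis unfolding th_def a
    using pascal2a[of N j 0] pascal2a[of N j 1] by simp
qed

lemma th_rec2: "th (Suc (Suc N)) (Suc (Suc j)) = th N (Suc (Suc j)) + 2 * th (Suc N) (Suc j) + th (Suc (Suc N)) j"
proof -
  have a: "Suc (Suc N) + Suc (Suc j) = Suc (Suc (Suc (Suc (N + j))))" "N + Suc (Suc j) = Suc (Suc (N+j))"
     "Suc N + Suc j = Suc (Suc (N + j))" "Suc (Suc N) + j = Suc (Suc (N + j))" by simp_all
  show ?thesis unfolding th_def a
    using pascal2b[of N j 0] pascal2b[of N j 1] by simp
qed

lemma th_0 [simp]: "th N 0 = 1" by (simp add: th_def)
lemma th_1 [simp]: "th N (Suc 0) = of_nat N" by (simp add: th_def)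
lemma th_top: "th N (Suc N) = 0"
proof -
  have "(N + Suc N) choose N = (N + Suc N) choose Suc N"
    using binomial_symmetric[of N "N + Suc N"] by simp
  then show ?thesis by (simp add: th_def)
qed

lemma smult2: "smult (2::rat) p = 2 * p"
proof -
  have "smult (2::rat) p = smult (1+1) p" by (simp only: one_add_one)
  also have "\<dots> = p + p" by (simp only: smult_add_left smult_1_left)
  also have "\<dots> = 2 * p" by (simp only: mult_2)
  finally show ?thesis .
qed

lemma smult2m': "smult (2 * a) p = smult (a::rat) (2 * p)"
proof -
  have "smult a (2 * p) = smult a (smult 2 p)" by (simp only: smult2)
  also have "\<dots> = smult (a * 2) p" by (rule smult_smult)
  finally show ?thesis by (simp only: mult.commute)
qed

definition cc :: "rat poly" where "cc = yv + 1"

definition S :: "nat \<Rightarrow> nat \<Rightarrow> rat poly" where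
  "S N L = (\<Sum>j<L. smult (th N j) (cc ^ j))"

lemma S_0 [simp]: "S N 0 = 0" by (simp add: S_def)
lemma S_Suc: "S N (Suc L) = S N L + smult (th N L) (cc ^ L)" by (simp add: S_def)

lemma cc_smult: "cc * smult a (cc ^ k) = smult a (cc ^ Suc k)"
  by (simp add: mult_smult_right)

lemma cc2_smult: "cc^2 * smult a (cc ^ k) = smult a (cc ^ Suc (Suc k))"
  by (simp add: mult_smult_right power2_eq_square mult.assoc)

lemma two_smult: "2 * smult a p = smult (2 * a) (p::rat poly)"
  by (simp add: smult2m' mult_smult_right)

lemma R1: "S (Suc N) (Suc L) = S N (Suc L) + cc * S N L + cc^2 * S (Suc N) (L - 1)"
proof (induction L)
  case 0 then show ?case by (simp add: S_Suc)
next
  case (Suc L)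
  show ?case
  proof (cases L)
    case 0
    have "S (Suc N) (Suc (Suc 0)) = 1 + smult (1 + of_nat N) cc" by (simp add: S_Suc)
    also have "\<dots> = 1 + smult (of_nat N) cc + cc" by (simp add: smult_add_left)
    also have "\<dots> = S N (Suc (Suc 0)) + cc * S N (Suc 0) + cc^2 * S (Suc N) (Suc 0 - 1)"
      by (simp add: S_Suc)
    finally show ?thesis using 0 by simp
  next
    case (Suc L')
    have e: "th (Suc N) (Suc (Suc L')) = th N (Suc (Suc L')) + th N (Suc L') + th (Suc N) L'"
      by (rule th_rec1)
    have "S (Suc N) (Suc (Suc L)) = S (Suc N) (Suc L) + smult (th (Suc N) (Suc L)) (cc ^ Suc L)"
      by (simp add: S_Suc)
    also have "\<dots> = S N (Suc L) + cc * S N L + cc^2 * S (Suc N) (L - 1) + smult (th (Suc N) (Suc L)) (cc ^ Suc L)"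
      using Suc.IH by simp
    also have "smult (th (Suc N) (Suc L)) (cc ^ Suc L) = smult (th N (Suc L)) (cc ^ Suc L)
        + cc * smult (th N L) (cc ^ L) + cc^2 * smult (th (Suc N) (L - 1)) (cc ^ (L - 1))"
      unfolding Suc cc_smult cc2_smult e by (simp add: smult_add_left)
    also have "S N (Suc L) + cc * S N L + cc^2 * S (Suc N) (L - 1) + (smult (th N (Suc L)) (cc ^ Suc L)
        + cc * smult (th N L) (cc ^ L) + cc^2 * smult (th (Suc N) (L - 1)) (cc ^ (L - 1)))
       = S N (Suc (Suc L)) + cc * S N (Suc L) + cc^2 * S (Suc N) (Suc L - 1)"
      unfolding Suc by (simp add: S_Suc distrib_left)
    finally show ?thesis .
  qed
qed

lemma R2: "S (Suc (Suc N)) (Suc L) = S N (Suc L) + 2 * cc * S (Suc N) L + cc^2 * S (Suc (Suc N)) (L - 1)"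
proof (induction L)
  case 0 then show ?case by (simp add: S_Suc)
next
  case (Suc L)
  show ?case
  proof (cases L)
    case 0
    have "S (Suc (Suc N)) (Suc (Suc 0)) = 1 + smult (2 + of_nat N) cc" by (simp add: S_Suc add.commute)
    also have "\<dots> = 1 + smult (of_nat N) cc + 2 * cc" by (simp add: smult_add_left smult2)
    also have "\<dots> = S N (Suc (Suc 0)) + 2 * cc * S (Suc N) (Suc 0) + cc^2 * S (Suc (Suc N)) (Suc 0 - 1)"
      by (simp add: S_Suc)
    finally show ?thesis using 0 by simp
  next
    case (Suc L')
    have e: "th (Suc (Suc N)) (Suc (Suc L')) = th N (Suc (Suc L')) + 2 * th (Suc N) (Suc L') + th (Suc (Suc N)) L'"
      by (rule th_rec2)
    have "S (Suc (Suc N)) (Suc (Suc L)) = S (Suc (Suc N)) (Suc L) + smult (th (Suc (Suc N)) (Suc L)) (cc ^ Suc L)"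
      by (simp add: S_Suc)
    also have "\<dots> = S N (Suc L) + 2 * cc * S (Suc N) L + cc^2 * S (Suc (Suc N)) (L - 1) + smult (th (Suc (Suc N)) (Suc L)) (cc ^ Suc L)"
      using Suc.IH by simp
    also have "smult (th (Suc (Suc N)) (Suc L)) (cc ^ Suc L) = smult (th N (Suc L)) (cc ^ Suc L)
        + 2 * (cc * smult (th (Suc N) L) (cc ^ L)) + cc^2 * smult (th (Suc (Suc N)) (L - 1)) (cc ^ (L - 1))"
      unfolding Suc cc_smult cc2_smult e two_smult by (simp add: smult_add_left)
    also have "S N (Suc L) + 2 * cc * S (Suc N) L + cc^2 * S (Suc (Suc N)) (L - 1) + (smult (th N (Suc L)) (cc ^ Suc L)
        + 2 * (cc * smult (th (Suc N) L) (cc ^ L)) + cc^2 * smult (th (Suc (Suc N)) (L - 1)) (cc ^ (L - 1)))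
       = S N (Suc (Suc L)) + 2 * cc * S (Suc N) (Suc L) + cc^2 * S (Suc (Suc N)) (Suc L - 1)"
      unfolding Suc by (simp add: S_Suc distrib_left mult.assoc)
    finally show ?thesis .
  qed
qed



lemma choose_sym_add: "(a + b) choose a = (a + b) choose (b::nat)"
  using binomial_symmetric[of a "a+b"] by simp

lemma hockey2: "(\<Sum>r\<le>d. (d + 1 - r) * ((M + r) choose M)) = (M + d + 2) choose d"
proof (induction d)
  case 0 then show ?case by simp
next
  case (Suc d)
  have split: "(\<Sum>r\<le>Suc d. (Suc d + 1 - r) * ((M + r) choose M))
     = (\<Sum>r\<le>Suc d. (d + 1 - r) * ((M + r) choose M)) + (\<Sum>r\<le>Suc d. (M + r) choose M)"
    by (subst sum.distrib[symmetric]) (rule sum.cong, auto simp: algebra_simps Suc_diff_le)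
  have a: "(\<Sum>r\<le>Suc d. (d + 1 - r) * ((M + r) choose M)) = (\<Sum>r\<le>d. (d + 1 - r) * ((M + r) choose M))"
    by simp
  have b: "(\<Sum>r\<le>Suc d. (M + r) choose M) = (\<Sum>r\<le>Suc d. (M + r) choose r)"
    by (rule sum.cong) (auto simp: choose_sym_add)
  have c: "(\<Sum>r\<le>Suc d. (M + r) choose r) = Suc (M + Suc d) choose Suc d"
    by (rule sum_choose_lower)
  have "(\<Sum>r\<le>Suc d. (Suc d + 1 - r) * ((M + r) choose M)) = ((M + d + 2) choose d) + (Suc (M + Suc d) choose Suc d)"
    using split a b c Suc.IH by simp
  also have "\<dots> = (M + Suc d + 2) choose Suc d"
    by simp
  finally show ?case .
qed

lemma main_nat:
  assumes im: "i \<le> m"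
  shows "(\<Sum>j<Suc m. (m + 1 - j) * ((m + j) choose m) * (j choose i)) = ((m+i) choose i) * ((2*m+2) choose (m - i))"
proof -
  define f where "f j = (m + 1 - j) * ((m + j) choose m) * (j choose i)" for j
  have "(\<Sum>j<Suc m. f j) = (\<Sum>j\<in>{i..m}. f j)"
  proof (rule sum.mono_neutral_right)
    show "\<forall>x\<in>{..<Suc m} - {i..m}. f x = 0"
    proof
      fix x assume "x \<in> {..<Suc m} - {i..m}"
      then have "x < i" by auto
      then show "f x = 0" unfolding f_def by (simp add: binomial_eq_0)
    qed
  qed auto
  also have "\<dots> = (\<Sum>r\<in>{0..m-i}. f (i + r))"
    using sum.atLeastAtMost_shift_0[OF im, of f] by (simp add: comp_def)
  also have "\<dots> = (\<Sum>r\<le>m-i. ((m+i) choose i) * ((m - i + 1 - r) * ((m + i + r) choose (m + i))))"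
  proof (rule sum.cong)
    fix r assume r: "r \<in> {..m-i}"
    have cm: "((i + r + m) choose (i + m)) * ((i + m) choose m) = ((i + r + m) choose m) * ((i + r) choose i)"
      by (rule choose_mult_lemma)
    have s1: "(i + m) choose m = (m + i) choose i" using choose_sym_add[of m i] by (simp add: add.commute)
    have "f (i + r) = (m + 1 - (i + r)) * (((i + r + m) choose m) * ((i + r) choose i))"
      by (simp add: f_def add.commute add.left_commute)
    also have "\<dots> = (m + 1 - (i + r)) * (((i + r + m) choose (i + m)) * ((m + i) choose i))"
      using cm s1 by simp
    also have "\<dots> = ((m+i) choose i) * ((m - i + 1 - r) * ((m + i + r) choose (m + i)))"
      using r im by (simp add: algebra_simps)
    finally show "f (i + r) = ((m+i) choose i) * ((m - i + 1 - r) * ((m + i + r) choose (m + i)))" .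
  qed (auto simp: atLeast0AtMost)
  also have "\<dots> = ((m+i) choose i) * (\<Sum>r\<le>m-i. (m - i + 1 - r) * ((m + i + r) choose (m + i)))"
    by (simp add: sum_distrib_left)
  also have "\<dots> = ((m+i) choose i) * ((m + i + (m - i) + 2) choose (m - i))"
    by (simp only: hockey2)
  also have "m + i + (m - i) + 2 = 2*m+2" using im by simp
  finally show ?thesis by (simp add: f_def)
qed

lemma nat_absorb: "Suc m * ((m + j) choose Suc m) = j * ((m + j) choose m)"
proof (cases j)
  case 0 then show ?thesis by simp
next
  case (Suc b)
  then show ?thesis using Suc_times_binomial_add[of m b] by simp
qed

lemma th_alt:
  assumes "j \<le> Suc m"
  shows "of_nat (Suc m) * th m j = of_nat ((Suc m - j) * ((m+j) choose m))"
proof -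
  have "of_nat (Suc m) * th m j = of_nat (Suc m * ((m+j) choose m)) - of_nat (Suc m * ((m + j) choose Suc m))"
    by (simp add: th_def algebra_simps)
  also have "\<dots> = of_nat (Suc m * ((m+j) choose m)) - of_nat (j * ((m + j) choose m))"
    by (simp only: nat_absorb)
  also have "\<dots> = of_nat (Suc m * ((m+j) choose m) - j * ((m + j) choose m))"
  proof -
    have le: "j * ((m + j) choose m) \<le> Suc m * ((m+j) choose m)" using assms by (rule mult_le_mono1)
    show ?thesis by (rule of_nat_diff[OF le, symmetric])
  qed
  also have "Suc m * ((m+j) choose m) - j * ((m + j) choose m) = (Suc m - j) * ((m+j) choose m)"
    by (simp add: diff_mult_distrib)
  finally show ?thesis .
qed

lemma cc_eq: "cc = [:1, 1:]"
  by (simp add: cc_def yv_def one_pCons)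

lemma coeff_cc_pow: "coeff (cc ^ j) i = of_nat (j choose i)"
proof (induction j arbitrary: i)
  case 0 then show ?case by simp
next
  case (Suc j)
  have "cc ^ Suc j = cc ^ j + pCons 0 (cc ^ j)" by (simp add: cc_eq)
  then show ?case
    by (cases i) (simp_all add: Suc.IH)
qed

lemma coeff_S: "coeff (S N L) i = (\<Sum>j<L. th N j * of_nat (j choose i))"
  by (simp add: S_def coeff_sum coeff_cc_pow)

lemma coeff_borel: "coeff (borel m) i = (if i \<le> m then of_nat ((2*m+2) choose (m-i)) * of_nat ((m+i) choose i) / of_nat (m+1) else 0)"
  by (simp add: borel_def coeff_sum)

lemma S_borel: "S m (Suc m) = borel m"
proof (rule poly_eqI)
  fix i
  show "coeff (S m (Suc m)) i = coeff (borel m) i"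
  proof (cases "i \<le> m")
    case True
    have "of_nat (Suc m) * coeff (S m (Suc m)) i = (\<Sum>j<Suc m. (of_nat (Suc m) * th m j) * of_nat (j choose i))"
      by (simp only: coeff_S sum_distrib_left mult.assoc)
    also have "\<dots> = (\<Sum>j<Suc m. of_nat ((m + 1 - j) * ((m + j) choose m) * (j choose i)))"
    proof (rule sum.cong[OF refl])
      fix j assume "j \<in> {..<Suc m}"
      then have "j \<le> Suc m" by simp
      have "(of_nat (Suc m) * th m j) * of_nat (j choose i) = of_nat ((Suc m - j) * ((m+j) choose m)) * of_nat (j choose i)"
        by (simp only: th_alt[OF \<open>j \<le> Suc m\<close>])
      also have "\<dots> = of_nat ((Suc m - j) * ((m+j) choose m) * (j choose i))"
        by (simp only: of_nat_mult)
      finally show "(of_nat (Suc m) * th m j) * of_nat (j choose i) = of_nat ((m + 1 - j) * ((m + j) choose m) * (j choose i))"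
        by simp
    qed
    also have "\<dots> = of_nat ((m+i) choose i) * of_nat ((2*m+2) choose (m - i))"
      by (subst of_nat_sum[symmetric], subst main_nat[OF True], rule of_nat_mult)
    finally have "coeff (S m (Suc m)) i = of_nat ((m+i) choose i) * of_nat ((2*m+2) choose (m - i)) / of_nat (Suc m)"
      by (simp add: field_simps del: of_nat_Suc)
    then show ?thesis using True by (simp add: coeff_borel)
  next
    case False
    then show ?thesis by (simp add: coeff_S coeff_borel binomial_eq_0)
  qed
qed



definition T :: "nat \<Rightarrow> nat \<Rightarrow> rat poly" where "T n k = S (n + k) (Suc n - k)"

lemma T_0: "T m 0 = borel m" by (simp add: T_def S_borel)
lemma T_top: "T 0 (Suc k) = 0" by (simp add: T_def)

lemma Trec0: "T (Suc m) 0 = (cc + 1) * T m 0 + cc^2 * T m 1"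
proof -
  have "T (Suc m) 0 = S (Suc m) (Suc (Suc m))" by (simp add: T_def)
  also have "\<dots> = S m (Suc (Suc m)) + cc * S m (Suc m) + cc^2 * S (Suc m) (Suc m - 1)"
    by (rule R1)
  also have "S m (Suc (Suc m)) = S m (Suc m)"
    using th_top[of m] by (simp add: S_Suc)
  finally show ?thesis by (simp add: T_def algebra_simps)
qed

lemma TrecK: "T (Suc m) (Suc k) = T m k + 2 * cc * T m (Suc k) + cc^2 * T m (Suc (Suc k))"
proof (cases "k \<le> m")
  case True
  define L where "L = m - k"
  have "T (Suc m) (Suc k) = S (Suc (Suc (m + k))) (Suc L)" using True by (simp add: T_def L_def Suc_diff_le)
  also have "\<dots> = S (m + k) (Suc L) + 2 * cc * S (Suc (m + k)) L + cc^2 * S (Suc (Suc (m + k))) (L - 1)"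
    by (rule R2)
  also have "\<dots> = T m k + 2 * cc * T m (Suc k) + cc^2 * T m (Suc (Suc k))"
    using True by (simp add: T_def L_def Suc_diff_le)
  finally show ?thesis .
next
  case False
  then show ?thesis by (simp add: T_def)
qed

definition Lf0 :: "rat poly poly \<Rightarrow> rat poly" where
  "Lf0 p = (\<Sum>i\<le>degree p. coeff p i * borel i)"

lemma Lf0_bound: "degree p \<le> n \<Longrightarrow> Lf0 p = (\<Sum>i\<le>n. coeff p i * borel i)"
  unfolding Lf0_def
  by (rule sum.mono_neutral_left) (auto simp: coeff_eq_0)

lemma Lf0_add: "Lf0 (p + q) = Lf0 p + Lf0 q"
proof -
  define n where "n = max (degree p) (degree q)"
  have "degree (p + q) \<le> n" "degree p \<le> n" "degree q \<le> n"
    by (auto simp: n_def degree_add_le)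
  then show ?thesis by (simp add: Lf0_bound sum.distrib algebra_simps)
qed

lemma Lf0_smult: "Lf0 (smult a p) = a * Lf0 p"
proof -
  have "degree (smult a p) \<le> degree p" by (rule degree_smult_le)
  then show ?thesis by (simp add: Lf0_bound[of _ "degree p"] sum_distrib_left mult.assoc)
qed

lemma Lf0_minus: "Lf0 (- p) = - Lf0 p"
  using Lf0_smult[of "-1" p] by simp

lemma Lf0_diff: "Lf0 (p - q) = Lf0 p - Lf0 q"
  using Lf0_add[of p "-q"] Lf0_minus[of q] by simp

lemma Lf0_monom: "Lf0 (monom 1 m) = borel m"
proof -
  have "Lf0 (monom 1 m) = (\<Sum>i\<le>m. coeff (monom 1 m) i * borel i)"
    by (simp add: Lf0_bound[of _ m] degree_monom_le)
  also have "\<dots> = (\<Sum>i\<le>m. if i = m then borel i else 0)"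
    by (rule sum.cong) auto
  finally show ?thesis by simp
qed

lemma monom_lin: "monom 1 m * ([:a, 1:] * q) = monom 1 (Suc m) * q + smult a (monom 1 m * (q :: rat poly poly))"
proof -
  have a: "[:a,1:] * q = smult a q + pCons 0 q" by simp
  have b: "monom 1 m * pCons 0 q = monom 1 (Suc m) * q" by (simp add: monom_Suc)
  show ?thesis by (simp only: a b distrib_left mult_smult_right add.commute)
qed

lemma mixed: "Lf0 (monom 1 m * Pop k) = cc ^ (2 * k) * T m k \<and> Lf0 (monom 1 m * Pop (Suc k)) = cc ^ (2 * Suc k) * T m (Suc k)"
proof (induction k arbitrary: m)
  case 0
  have a: "Lf0 (monom 1 m * Pop 0) = cc ^ (2 * 0) * T m 0" by (simp add: T_0 Lf0_monom)
  have "Pop 1 = [:- (yv + 2), 1:] * 1" by simp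
  then have "monom 1 m * Pop 1 = monom 1 (Suc m) * 1 + smult (- (yv + 2)) (monom 1 m * 1)"
    by (simp only: monom_lin)
  then have "Lf0 (monom 1 m * Pop 1) = Lf0 (monom 1 (Suc m)) + (- (yv + 2)) * Lf0 (monom 1 m)"
    by (simp only: Lf0_add Lf0_smult mult_1_right)
  also have "\<dots> = T (Suc m) 0 - (cc + 1) * T m 0" by (simp add: Lf0_monom T_0 cc_def algebra_simps)
  also have "\<dots> = cc^2 * T m 1" by (simp add: Trec0)
  finally show ?case using a by simp
next
  case (Suc k)
  have IH1: "Lf0 (monom 1 m' * Pop k) = cc ^ (2 * k) * T m' k"
   and IH2: "Lf0 (monom 1 m' * Pop (Suc k)) = cc ^ (2 * Suc k) * T m' (Suc k)" for m'
    using Suc.IH by auto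
  have "monom 1 m * Pop (Suc (Suc k)) = monom 1 (Suc m) * Pop (Suc k) + smult (- (2 * (yv + 1))) (monom 1 m * Pop (Suc k))
      - smult ((yv + 1)^2) (monom 1 m * Pop k)"
    by (simp only: Pop.simps(3) right_diff_distrib monom_lin mult_smult_right diff_conv_add_uminus smult_minus_left distrib_left mult_minus_right add.assoc)
  then have "Lf0 (monom 1 m * Pop (Suc (Suc k))) = Lf0 (monom 1 (Suc m) * Pop (Suc k)) - 2 * cc * Lf0 (monom 1 m * Pop (Suc k))
      - cc^2 * Lf0 (monom 1 m * Pop k)"
    by (simp add: Lf0_diff Lf0_add Lf0_smult cc_def algebra_simps)
  also have "\<dots> = cc ^ (2 * Suc k) * T (Suc m) (Suc k) - 2 * cc * (cc ^ (2 * Suc k) * T m (Suc k))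
      - cc^2 * (cc ^ (2 * k) * T m k)"
    by (simp only: IH1 IH2)
  also have "\<dots> = cc ^ (2 * Suc (Suc k)) * T m (Suc (Suc k))"
    by (simp add: TrecK algebra_simps power2_eq_square)
  finally show ?case using IH2 by simp
qed

lemma Lf0_Pop: "Lf0 (Pop (Suc k)) = 0"
  using mixed[of 0 k] by (simp add: T_top)



lemma coeff_Pop_SS: "coeff (Pop (Suc (Suc n))) k =
   - (2 * cc) * coeff (Pop (Suc n)) k + (if k = 0 then 0 else coeff (Pop (Suc n)) (k - 1)) - cc^2 * coeff (Pop n) k"
proof -
  have e: "[:a, 1:] * p = smult a p + pCons 0 p" for a :: "rat poly" and p :: "rat poly poly" by simp
  show ?thesis by (simp only: Pop.simps(3) e coeff_diff coeff_add coeff_smult coeff_pCons' cc_def mult_2 minus_add_distrib)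
qed

lemma Pop_top: "(\<forall>k>n. coeff (Pop n) k = 0) \<and> coeff (Pop n) n = 1 \<and> (\<forall>k>Suc n. coeff (Pop (Suc n)) k = 0) \<and> coeff (Pop (Suc n)) (Suc n) = 1"
proof (induction n)
  case 0
  then show ?case by (auto simp: coeff_pCons split: nat.split)
next
  case (Suc n)
  have a: "\<forall>k>Suc (Suc n). coeff (Pop (Suc (Suc n))) k = 0"
  proof (intro allI impI)
    fix k assume k: "k > Suc (Suc n)"
    then obtain k' where "k = Suc k'" by (cases k) auto
    with k Suc.IH show "coeff (Pop (Suc (Suc n))) k = 0" by (simp only: coeff_Pop_SS) simp
  qed
  have b: "coeff (Pop (Suc (Suc n))) (Suc (Suc n)) = 1"
    using Suc.IH by (simp only: coeff_Pop_SS) simp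
  show ?case using Suc.IH a b by simp
qed

lemma Pop_deg: "degree (Pop n) \<le> n"
  using Pop_top[of n] by (intro degree_le) auto

lemma Pop_lead: "coeff (Pop n) n = 1"
  using Pop_top[of n] by auto

abbreviation DD :: "rat poly fps" where "DD \<equiv> (1 + fps_const (yv + 1) * fps_X) ^ 2"

lemma DD_inv: "DD * Ldenom_inv = 1"
  unfolding Ldenom_inv_def by (rule fps_right_inverse) (simp add: fps_power_zeroth)

lemma DD_expand: "DD * f = f + fps_const (2 * cc) * (fps_X * f) + fps_const (cc^2) * (fps_X * (fps_X * f))"
proof -
  have c1: "fps_const (2 * cc) = 2 * fps_const cc"
    by (simp only: fps_const_mult[symmetric] numeral_fps_const)
  have c2: "fps_const (cc^2) = fps_const cc * fps_const cc"
    by (simp only: fps_const_mult power2_eq_square)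
  have c3: "fps_const (yv + 1) = fps_const cc" by (simp only: cc_def)
  show ?thesis unfolding c1 c2 c3 by (simp add: power2_eq_square algebra_simps)
qed

lemma DD_nth0: "fps_nth (DD * f) (0) = fps_nth (f) (0)"
  by (simp only: DD_expand) simp
lemma DD_nth1: "fps_nth (DD * f) (Suc 0) = fps_nth (f) (Suc 0) + 2 * cc * fps_nth (f) (0)"
  by (simp only: DD_expand) simp
lemma DD_nthSS: "fps_nth (DD * f) (Suc (Suc n)) = fps_nth (f) (Suc (Suc n)) + 2 * cc * fps_nth (f) (Suc n) + cc^2 * fps_nth (f) (n)"
  by (simp only: DD_expand) simp

definition hh :: "nat \<Rightarrow> rat poly fps" where "hh k = Lg * Lf ^ k"

lemma hh_0: "DD * hh 0 = 1 + fps_const yv * fps_X"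
proof -
  have "DD * hh 0 = (1 + fps_const yv * fps_X) * (DD * Ldenom_inv)"
    by (simp add: hh_def Lg_def algebra_simps)
  then show ?thesis by (simp add: DD_inv)
qed

lemma hh_Suc: "DD * hh (Suc k) = fps_X * hh k"
proof -
  have "DD * hh (Suc k) = fps_X * hh k * (DD * Ldenom_inv)"
    by (simp add: hh_def Lf_def algebra_simps)
  then show ?thesis by (simp add: DD_inv)
qed

lemma Lmat_hh: "Lmat n k = fps_nth (hh k) (n)"
  by (simp add: Lmat_def riordan_def hh_def)

lemma hh_nth0: "fps_nth (hh k) 0 = (if k = 0 then 1 else 0)"
proof (cases k)
  case 0
  have "fps_nth (hh 0) 0 = fps_nth (DD * hh 0) 0" by (rule DD_nth0[symmetric])
  also have "\<dots> = 1" by (simp only: hh_0) simp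
  finally show ?thesis using 0 by simp
next
  case (Suc k')
  have "fps_nth (hh (Suc k')) 0 = fps_nth (DD * hh (Suc k')) 0" by (rule DD_nth0[symmetric])
  also have "\<dots> = 0" by (simp only: hh_Suc) simp
  finally show ?thesis using Suc by simp
qed

lemma hh_nth1: "fps_nth (hh k) (Suc 0) = (if k = 0 then - (yv + 2) else if k = 1 then 1 else 0)"
proof (cases k)
  case 0
  have "fps_nth (hh 0) (Suc 0) = fps_nth (DD * hh 0) (Suc 0) - 2 * cc * fps_nth (hh 0) 0"
    by (simp only: DD_nth1)
  also have "fps_nth (DD * hh 0) (Suc 0) = yv" by (simp only: hh_0) simp
  finally show ?thesis using 0 by (simp add: hh_nth0 cc_def algebra_simps)
next
  case (Suc k')
  have "fps_nth (hh (Suc k')) (Suc 0) = fps_nth (DD * hh (Suc k')) (Suc 0) - 2 * cc * fps_nth (hh (Suc k')) 0"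
    by (simp only: DD_nth1)
  also have "fps_nth (DD * hh (Suc k')) (Suc 0) = fps_nth (hh k') 0" by (simp only: hh_Suc) simp
  finally show ?thesis using Suc by (simp add: hh_nth0)
qed

lemma hh_nthSS: "fps_nth (hh k) (Suc (Suc n)) = (if k = 0 then 0 else fps_nth (hh (k - 1)) (Suc n)) - 2 * cc * fps_nth (hh k) (Suc n) - cc^2 * fps_nth (hh k) n"
proof -
  have a: "fps_nth (hh k) (Suc (Suc n)) = fps_nth (DD * hh k) (Suc (Suc n)) - 2 * cc * fps_nth (hh k) (Suc n) - cc^2 * fps_nth (hh k) n"
    by (simp only: DD_nthSS)
  have b: "fps_nth (DD * hh k) (Suc (Suc n)) = (if k = 0 then 0 else fps_nth (hh (k - 1)) (Suc n))"
  proof (cases k)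
    case 0 then show ?thesis by (simp only: hh_0) simp
  next
    case (Suc k') then show ?thesis by (simp only: hh_Suc) simp
  qed
  show ?thesis using a b by simp
qed

lemma Lmat_Pop: "Lmat n k = coeff (Pop n) k \<and> Lmat (Suc n) k = coeff (Pop (Suc n)) k"
proof (induction n arbitrary: k)
  case 0
  have a: "Lmat 0 k = coeff (Pop 0) k" by (simp add: Lmat_hh hh_nth0)
  have b: "Lmat (Suc 0) k = coeff (Pop (Suc 0)) k"
    by (simp add: Lmat_hh hh_nth1 coeff_pCons split: nat.split)
  show ?case using a b by simp
next
  case (Suc n)
  have IH: "Lmat n k' = coeff (Pop n) k'" "Lmat (Suc n) k' = coeff (Pop (Suc n)) k'" for k'
    using Suc.IH by auto
  have "Lmat (Suc (Suc n)) k = coeff (Pop (Suc (Suc n))) k"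
    unfolding coeff_Pop_SS Lmat_hh hh_nthSS
    by (simp add: Lmat_hh[symmetric] IH algebra_simps)
  then show ?case using IH by simp
qed

lemma Lmat_coeff: "Lmat n k = coeff (Pop n) k"
  using Lmat_Pop by blast



function ic :: "(nat \<Rightarrow> nat \<Rightarrow> 'a::comm_ring_1) \<Rightarrow> nat \<Rightarrow> nat \<Rightarrow> 'a" where
  "ic A j i = (if i \<le> j then (if i = j then 1 else 0) else - (\<Sum>k<i. A i k * ic A j k))"
  by auto
termination by (relation "measure (\<lambda>(A, j, i). i)") auto

declare ic.simps [simp del]

lemma ic_lt: "i < j \<Longrightarrow> ic A j i = 0" by (subst ic.simps) simp
lemma ic_eq: "ic A j j = 1" by (subst ic.simps) simp
lemma ic_gt: "j < i \<Longrightarrow> ic A j i = - (\<Sum>k<i. A i k * ic A j k)" by (subst ic.simps) simp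

lemma sum_atMost_split: "(\<Sum>k\<le>(i::nat). f k) = (\<Sum>k<i. f k) + f i"
  by (subst lessThan_Suc_atMost[symmetric]) (rule sum.lessThan_Suc)

lemma ic_inverse:
  assumes diag: "\<And>n. A n n = 1"
  shows "is_lower_inverse A (\<lambda>i j. ic A j i)"
  unfolding is_lower_inverse_def
proof (intro conjI allI impI)
  fix i j :: nat
  assume "i < j" then show "ic A j i = 0" by (rule ic_lt)
next
  fix i j :: nat
  show "(\<Sum>k\<le>i. A i k * ic A j k) = (if i = j then 1 else 0)"
  proof (cases "i < j")
    case True
    then have "(\<Sum>k\<le>i. A i k * ic A j k) = (\<Sum>k\<le>i. 0)"
      by (intro sum.cong) (auto simp: ic_lt)
    then show ?thesis using True by simp
  next
    case False
    show ?thesis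
    proof (cases "i = j")
      case True
      have "(\<Sum>k<i. A i k * ic A j k) = (\<Sum>k<i. 0)"
        using True by (intro sum.cong) (auto simp: ic_lt)
      then show ?thesis using True by (simp add: sum_atMost_split ic_eq diag)
    next
      case ne: False
      with False have "j < i" by simp
      then show ?thesis using ne by (simp add: sum_atMost_split ic_gt diag)
    qed
  qed
qed

lemma uniq_tri:
  fixes A :: "nat \<Rightarrow> nat \<Rightarrow> 'a::comm_ring_1"
  assumes diag: "\<And>n. A n n = 1"
    and x: "\<And>n. (\<Sum>k\<le>n. A n k * x k) = d n"
    and y: "\<And>n. (\<Sum>k\<le>n. A n k * y k) = d n"
  shows "x n = y n"
proof (induction n rule: less_induct)
  case (less n)
  have "(\<Sum>k<n. A n k * x k) = (\<Sum>k<n. A n k * y k)"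
    using less by (intro sum.cong) auto
  moreover have "(\<Sum>k<n. A n k * x k) + x n = (\<Sum>k<n. A n k * y k) + y n"
    using x[of n] y[of n] by (simp add: sum_atMost_split diag)
  ultimately show ?case by simp
qed

lemma borel_0: "borel 0 = 1" by (simp add: borel_def)

lemma Lf0_Pop_all: "Lf0 (Pop n) = (if n = 0 then 1 else 0)"
proof (cases n)
  case 0
  have "Lf0 1 = borel 0" using Lf0_monom[of 0] by simp
  then show ?thesis using 0 by (simp add: borel_0)
next
  case (Suc k) then show ?thesis by (simp add: Lf0_Pop)
qed

lemma borel_sum: "(\<Sum>k\<le>n. Lmat n k * borel k) = (if n = 0 then 1 else 0)"
  using Lf0_bound[OF Pop_deg[of n]] Lf0_Pop_all[of n] by (simp add: Lmat_coeff)

lemma Lmat_diag: "Lmat n n = 1" by (simp add: Lmat_coeff Pop_lead)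

lemma moment_linear_sum:
  fixes \<L> :: "rat poly poly \<Rightarrow> rat poly"
  assumes add: "\<forall>p q. \<L> (p + q) = \<L> p + \<L> q"
  shows "\<L> (\<Sum>i\<in>I. f i) = (\<Sum>i\<in>I. \<L> (f i))"
proof (induction I rule: infinite_finite_induct)
  case (infinite A)
  have "\<L> (0 + 0) = \<L> 0 + \<L> 0" using add by blast
  then have h: "\<L> 0 = \<L> 0 + \<L> 0" by simp
  have "\<L> 0 = 0" using add_cancel_right_right[of "\<L> 0" "\<L> 0"] h by blast
  then show ?case using infinite by simp
next
  case empty
  have "\<L> (0 + 0) = \<L> 0 + \<L> 0" using add by blast
  then have h: "\<L> 0 = \<L> 0 + \<L> 0" by simp
  have "\<L> 0 = 0" using add_cancel_right_right[of "\<L> 0" "\<L> 0"] h by blast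
  then show ?case by simp
next
  case (insert x F)
  then show ?case using add by simp
qed

lemma moment_expand:
  assumes m: "moment_functional \<L>" and d: "degree p \<le> N"
  shows "\<L> p = (\<Sum>i\<le>N. coeff p i * \<L> (monom 1 i))"
proof -
  have add: "\<forall>p q. \<L> (p + q) = \<L> p + \<L> q" and sm: "\<forall>c p. \<L> (smult c p) = c * \<L> p"
    using m unfolding moment_functional_def by auto
  have "\<L> p = \<L> (\<Sum>i\<le>N. smult (coeff p i) (monom 1 i))"
    using poly_as_sum_of_monoms'[OF d] by (simp add: smult_monom)
  also have "\<dots> = (\<Sum>i\<le>N. \<L> (smult (coeff p i) (monom 1 i)))"
    by (rule moment_linear_sum[OF add])
  also have "\<dots> = (\<Sum>i\<le>N. coeff p i * \<L> (monom 1 i))"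
    using sm by simp
  finally show ?thesis .
qed

theorem mainTheorem7:
  shows "(\<exists>M. is_lower_inverse Lmat M)
     \<and> (\<forall>M. is_lower_inverse Lmat M \<longrightarrow> (\<forall>n. M n 0 = borel n))
     \<and> (\<exists>\<L>. moment_functional \<L>)
     \<and> (\<forall>\<L>. moment_functional \<L> \<longrightarrow> (\<forall>n. \<L> (monom 1 n) = borel n))"
proof (intro conjI allI impI)
  show "\<exists>M. is_lower_inverse Lmat M"
    using ic_inverse[of Lmat, OF Lmat_diag] by blast
next
  fix M n assume M: "is_lower_inverse Lmat M"
  have "\<And>n. (\<Sum>k\<le>n. Lmat n k * M k 0) = (if n = 0 then 1 else 0)"
    using M unfolding is_lower_inverse_def by auto
  then show "M n 0 = borel n"
    by (rule uniq_tri[of Lmat, OF Lmat_diag _ borel_sum])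
next
  show "\<exists>\<L>. moment_functional \<L>"
  proof
    show "moment_functional Lf0"
      unfolding moment_functional_def
    proof (intro conjI allI impI)
      fix p q show "Lf0 (p + q) = Lf0 p + Lf0 q" by (rule Lf0_add)
    next
      fix c p show "Lf0 (smult c p) = c * Lf0 p" by (rule Lf0_smult)
    next
      show "Lf0 1 = 1" using Lf0_Pop_all[of 0] by simp
    next
      fix n :: nat assume "1 \<le> n"
      then show "Lf0 (Pop n) = 0" using Lf0_Pop_all[of n] by simp
    qed
  qed
next
  fix \<L> n assume m: "moment_functional \<L>"
  have P: "\<L> (Pop n) = (if n = 0 then 1 else 0)" for n
    using m unfolding moment_functional_def by (cases n) auto
  have "\<And>n. (\<Sum>k\<le>n. Lmat n k * \<L> (monom 1 k)) = (if n = 0 then 1 else 0)"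
    using moment_expand[OF m Pop_deg] P by (simp add: Lmat_coeff)
  then show "\<L> (monom 1 n) = borel n"
    by (rule uniq_tri[of Lmat, OF Lmat_diag _ borel_sum])
qed

end
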